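(* Let $\eta_1,\eta_2,\dots$ be iid with $\Pr(\eta_1\le x)=e^x$, $x\le 0$. Let $j=j(n)$, $k=k(n)$ be integers with $1\le j<k$ such that $j/n\to\lambda_1>0$ and $k/n\to\lambda_2>\lambda_1$ as $n\to\infty$. Put $\beta_i=\lambda_i/(\lambda_2-\lambda_1)$, $i=1,2$. Then for all $x_1,x_2\le 0$, \[ \lim_{n\to\infty}\Pr\left(\eta_j\le\frac{x_1}{n},\ \eta_k\le\frac{x_2}{n}\ \Big|\ \eta_j\text{ and }\eta_k\text{ are records}\right)=H_{\lambda_1,\lambda_2}(x_1,x_2), \] where \[ H_{\lambda_1,\lambda_2}(x_1,x_2)=\begin{cases} e^{\lambda_1x_1}\left(\beta_2e^{(\lambda_2-\lambda_1)x_2}-\beta_1e^{(\lambda_2-\lambda_1)x_1}\right), & \text{if } x_1<x_2,\\ e^{\lambda_2x_2}, & \text{if } x_1\ge x_2. \end{cases} \]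
   Context: $\eta_m$ is a record if $\eta_m>\max(\eta_1,\dots,\eta_{m-1})$; $\eta_1$ is always a record. *)

theory Defs
  imports "HOL-Probability.Probability"
begin

text \<open>Indices start at 1: eta 1, eta 2, ...  The value eta 0 is irrelevant.
  eta m is a record at outcome w iff eta m w > max(eta 1 w, ..., eta (m-1) w);
  eta 1 is always a record (vacuous condition).\<close>
definition is_record :: "(nat \<Rightarrow> 'a \<Rightarrow> real) \<Rightarrow> nat \<Rightarrow> 'a \<Rightarrow> bool" where
  "is_record eta m w \<longleftrightarrow> (\<forall>i\<in>{1..<m}. eta i w < eta m w)"

definition H :: "real \<Rightarrow> real \<Rightarrow> real \<Rightarrow> real \<Rightarrow> real" where
  "H l1 l2 x1 x2 =
    (let b1 = l1 / (l2 - l1); b2 = l2 / (l2 - l1) in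
     if x1 < x2 then exp (l1 * x1) * (b2 * exp ((l2 - l1) * x2) - b1 * exp ((l2 - l1) * x1))
     else exp (l2 * x2))"

end

theory Submission
  imports Defs
begin

lemma B1:
  fixes m c :: real assumes m: "m > 0"
  shows "(\<integral>\<^sup>+ y. ennreal (indicator {..c} y * exp (m*y)) \<partial>lborel) = ennreal (exp (m*c)/m)"
proof -
  have h: "((\<lambda>x. exp (-m*x)) has_integral exp (-m*(-c))/m) {-c..}"
    using has_integral_exp_minus_to_infinity[OF m] .
  have 1: "(\<integral>\<^sup>+ x. ennreal (indicator {-c..} x * exp (-m*x)) \<partial>lborel) = ennreal (exp (m*c)/m)"
    using nn_integral_has_integral_lebesgue[OF _ h] by simp
  have "(\<integral>\<^sup>+ y. ennreal (indicator {..c} y * exp (m*y)) \<partial>lborel)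
      = ennreal \<bar>-1::real\<bar> * (\<integral>\<^sup>+ x. ennreal (indicator {..c} (0 + -1*x) * exp (m*(0 + -1*x))) \<partial>lborel)"
    by (rule nn_integral_real_affine) auto
  also have "\<dots> = (\<integral>\<^sup>+ x. ennreal (indicator {-c..} x * exp (-m*x)) \<partial>lborel)"
    by (auto intro!: nn_integral_cong simp: indicator_def)
  finally show ?thesis using 1 by simp
qed

lemma B1c:
  fixes m c K :: real assumes m: "m > 0" and K: "K \<ge> 0"
  shows "(\<integral>\<^sup>+ y. ennreal (indicator {..c} y * exp (m*y) * K) \<partial>lborel) = ennreal (exp (m*c)/m * K)"
proof -
  have "(\<integral>\<^sup>+ y. ennreal (indicator {..c} y * exp (m*y) * K) \<partial>lborel)
     = (\<integral>\<^sup>+ y. ennreal (indicator {..c} y * exp (m*y)) * ennreal K \<partial>lborel)"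
    using K by (intro nn_integral_cong) (simp add: ennreal_mult)
  also have "\<dots> = (\<integral>\<^sup>+ y. ennreal (indicator {..c} y * exp (m*y)) \<partial>lborel) * ennreal K"
    by (rule nn_integral_multc) measurable
  also have "\<dots> = ennreal (exp (m*c)/m) * ennreal K"
    using B1[OF m] by simp
  also have "\<dots> = ennreal (exp (m*c)/m * K)"
    by (rule ennreal_mult[symmetric]) (use m K in auto)
  finally show ?thesis .
qed

lemma B1o:
  fixes m c :: real assumes m: "m > 0"
  shows "(\<integral>\<^sup>+ y. ennreal (indicator {..<c} y * exp (m*y)) \<partial>lborel) = ennreal (exp (m*c)/m)"
proof -
  have "(\<integral>\<^sup>+ y. ennreal (indicator {..<c} y * exp (m*y)) \<partial>lborel)
     = (\<integral>\<^sup>+ y. ennreal (indicator {..c} y * exp (m*y)) \<partial>lborel)"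
    by (intro nn_integral_cong_AE, use AE_lborel_singleton[of c] in eventually_elim)
       (auto simp: indicator_def)
  then show ?thesis using B1[OF m] by simp
qed

lemma ennreal_sub_eq:
  fixes x :: ennreal and r s :: real
  assumes "x + ennreal r = ennreal s" "0 \<le> r"
  shows "x = ennreal (s - r)"
proof -
  have "x \<noteq> \<top>" using assms(1) by auto
  then obtain p where p: "x = ennreal p" "p \<ge> 0" by (cases x) auto
  then have "ennreal (p + r) = ennreal s" using assms by (simp add: ennreal_plus)
  then have "p + r = s \<or> (p + r \<le> 0 \<and> s \<le> 0)" by (metis ennreal_eq_0_iff ennreal_inj linorder_le_cases order_trans)
  then show ?thesis
  proof
    assume "p + r = s" then show ?thesis using p by simp
  next
    assume h: "p + r \<le> 0 \<and> s \<le> 0"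
    then have "p = 0" "s - r \<le> 0" using p assms by auto
    then show ?thesis using p by (simp add: ennreal_neg)
  qed
qed

lemma Q:
  fixes m y b :: real assumes m: "m > 0"
  shows "(\<integral>\<^sup>+ z. ennreal (indicator {y<..b} z * exp (m*z)) \<partial>lborel) = ennreal ((exp (m*b) - exp (m*y))/m)"
proof (cases "y \<le> b")
  case True
  have "(\<integral>\<^sup>+ z. ennreal (indicator {..b} z * exp (m*z)) \<partial>lborel)
     = (\<integral>\<^sup>+ z. ennreal (indicator {y<..b} z * exp (m*z)) + ennreal (indicator {..y} z * exp (m*z)) \<partial>lborel)"
    using True by (intro nn_integral_cong) (auto simp: indicator_def)
  also have "\<dots> = (\<integral>\<^sup>+ z. ennreal (indicator {y<..b} z * exp (m*z)) \<partial>lborel) + (\<integral>\<^sup>+ z. ennreal (indicator {..y} z * exp (m*z)) \<partial>lborel)"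
    by (rule nn_integral_add) measurable
  finally have "(\<integral>\<^sup>+ z. ennreal (indicator {y<..b} z * exp (m*z)) \<partial>lborel) + ennreal (exp (m*y)/m) = ennreal (exp (m*b)/m)"
    using B1[OF m] by simp
  from ennreal_sub_eq[OF this] m show ?thesis by (simp add: diff_divide_distrib)
next
  case False
  then have "exp (m*b) \<le> exp (m*y)" using m by simp
  then have "(exp (m*b) - exp (m*y))/m \<le> 0" using m by (simp add: divide_nonpos_pos)
  then show ?thesis using False by (simp add: ennreal_neg indicator_def)
qed

lemma R:
  fixes m jr b c :: real assumes m: "m > 0" and j: "jr > 0" and cb: "c \<le> b"
  shows "(\<integral>\<^sup>+ y. ennreal (indicator {..c} y * (exp (jr*y) * (exp (m*b) - exp (m*y))/m)) \<partial>lborel)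
     = ennreal ((exp (m*b + jr*c)/jr - exp ((jr+m)*c)/(jr+m))/m)"
proof -
  have "(\<integral>\<^sup>+ y. ennreal (indicator {..c} y * exp (jr*y) * (exp (m*b)/m)) \<partial>lborel)
     = (\<integral>\<^sup>+ y. ennreal (indicator {..c} y * (exp (jr*y) * (exp (m*b) - exp (m*y))/m)) + ennreal (indicator {..c} y * exp ((jr+m)*y) * (1/m)) \<partial>lborel)"
  proof (intro nn_integral_cong)
    fix y
    show "ennreal (indicator {..c} y * exp (jr*y) * (exp (m*b)/m)) = ennreal (indicator {..c} y * (exp (jr*y) * (exp (m*b) - exp (m*y))/m)) + ennreal (indicator {..c} y * exp ((jr+m)*y) * (1/m))"
    proof (cases "y \<le> c")
      case True
      then have "exp (m*y) \<le> exp (m*b)" using cb m by simp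
      then have "0 \<le> exp (jr*y) * (exp (m*b) - exp (m*y))/m" using m by simp
      moreover have "exp (jr*y) * (exp (m*b))/m = exp (jr*y) * (exp (m*b) - exp (m*y))/m + exp ((jr+m)*y) * (1/m)"
        using m by (simp add: field_simps exp_add[symmetric] distrib_right)
      ultimately show ?thesis using True m by (simp add: ennreal_plus[symmetric] del: ennreal_plus)
    qed (simp add: indicator_def)
  qed
  also have "\<dots> = (\<integral>\<^sup>+ y. ennreal (indicator {..c} y * (exp (jr*y) * (exp (m*b) - exp (m*y))/m)) \<partial>lborel) + (\<integral>\<^sup>+ y. ennreal (indicator {..c} y * exp ((jr+m)*y) * (1/m)) \<partial>lborel)"
    by (rule nn_integral_add) measurable
  finally have "(\<integral>\<^sup>+ y. ennreal (indicator {..c} y * (exp (jr*y) * (exp (m*b) - exp (m*y))/m)) \<partial>lborel) + ennreal (exp ((jr+m)*c)/(jr+m) * (1/m))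
       = ennreal (exp (jr*c)/jr * (exp (m*b)/m))"
    using B1c[OF j, of "exp (m*b)/m" c] B1c[of "jr+m" "1/m" c] m j by simp
  from ennreal_sub_eq[OF this] m j
  have "(\<integral>\<^sup>+ y. ennreal (indicator {..c} y * (exp (jr*y) * (exp (m*b) - exp (m*y))/m)) \<partial>lborel) = ennreal (exp (jr*c)/jr * (exp (m*b)/m) - exp ((jr+m)*c)/(jr+m) * (1/m))"
    by simp
  moreover have "exp (jr*c)/jr * (exp (m*b)/m) - exp ((jr+m)*c)/(jr+m) * (1/m) = (exp (m*b + jr*c)/jr - exp ((jr+m)*c)/(jr+m))/m"
    by (simp add: exp_add diff_divide_distrib)
  ultimately show ?thesis by simp
qed

definition Dm :: "real measure" where
  "Dm = density lborel (\<lambda>y. ennreal (indicator {..0} y * exp y))"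

lemma sets_Dm[simp, measurable_cong]: "sets Dm = sets borel"
  by (simp add: Dm_def)

lemma space_Dm[simp]: "space Dm = UNIV"
  by (simp add: Dm_def)

lemma Dm_int:
  assumes [measurable]: "g \<in> borel_measurable borel"
  shows "(\<integral>\<^sup>+ y. g y \<partial>Dm) = (\<integral>\<^sup>+ y. ennreal (indicator {..0} y * exp y) * g y \<partial>lborel)"
  unfolding Dm_def by (subst nn_integral_density) auto

lemma emeasure_Dm_Iic: "emeasure Dm {..t} = ennreal (exp (min t 0))"
proof -
  have "emeasure Dm {..t} = (\<integral>\<^sup>+ y. ennreal (indicator {..0} y * exp y) * indicator {..t} y \<partial>lborel)"
    unfolding Dm_def by (subst emeasure_density) auto
  also have "\<dots> = (\<integral>\<^sup>+ y. ennreal (indicator {..min t 0} y * exp (1*y)) \<partial>lborel)"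
    by (intro nn_integral_cong) (auto simp: indicator_def)
  also have "\<dots> = ennreal (exp (min t 0))" using B1[of 1] by simp
  finally show ?thesis .
qed

lemma emeasure_Dm_Iio: "t \<le> 0 \<Longrightarrow> emeasure Dm {..<t} = ennreal (exp t)"
proof -
  assume t: "t \<le> 0"
  have "emeasure Dm {..<t} = (\<integral>\<^sup>+ y. ennreal (indicator {..0} y * exp y) * indicator {..<t} y \<partial>lborel)"
    unfolding Dm_def by (subst emeasure_density) auto
  also have "\<dots> = (\<integral>\<^sup>+ y. ennreal (indicator {..<t} y * exp (1*y)) \<partial>lborel)"
    using t by (intro nn_integral_cong) (auto simp: indicator_def)
  also have "\<dots> = ennreal (exp t)" using B1o[of 1] by simp
  finally show ?thesis .
qed

lemma prob_space_Dm: "prob_space Dm"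
proof
  have "emeasure Dm UNIV = (\<integral>\<^sup>+ y. ennreal (indicator {..0} y * exp y) * indicator UNIV y \<partial>lborel)"
    unfolding Dm_def by (subst emeasure_density) auto
  also have "\<dots> = (\<integral>\<^sup>+ y. ennreal (indicator {..0} y * exp (1*y)) \<partial>lborel)"
    by (intro nn_integral_cong) (auto simp: indicator_def)
  also have "\<dots> = 1" using B1[of 1 0] by simp
  finally show "emeasure Dm (space Dm) = 1" by simp
qed

lemma real_distribution_Dm: "real_distribution Dm"
  unfolding real_distribution_def real_distribution_axioms_def using prob_space_Dm by simp

lemma distr_eq_Dm:
  assumes P: "prob_space M" and X[measurable]: "X \<in> borel_measurable M"
    and F: "\<And>x. x \<le> 0 \<Longrightarrow> measure M {w \<in> space M. X w \<le> x} = exp x"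
  shows "distr M borel X = Dm"
proof (rule cdf_unique)
  interpret prob_space M by fact
  show "real_distribution (distr M borel X)" by simp
  show "real_distribution Dm" by (rule real_distribution_Dm)
  show "cdf (distr M borel X) = cdf Dm"
  proof
    fix x :: real
    have "cdf (distr M borel X) x = measure M {w \<in> space M. X w \<le> x}"
      unfolding cdf_def by (subst measure_distr) (auto intro!: arg_cong[where f="measure M"])
    also have "\<dots> = exp (min x 0)"
    proof (cases "x \<le> 0")
      case True then show ?thesis using F by simp
    next
      case False
      have "measure M {w \<in> space M. X w \<le> 0} \<le> measure M {w \<in> space M. X w \<le> x}"
        using False by (intro finite_measure_mono) auto
      moreover have "measure M {w \<in> space M. X w \<le> x} \<le> 1" by simp
      ultimately show ?thesis using F[of 0] False by simp
    qed
    also have "\<dots> = cdf Dm x"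
      unfolding cdf_def using emeasure_Dm_Iic[of x] prob_space_Dm
      by (simp add: measure_def)
    finally show "cdf (distr M borel X) x = cdf Dm x" .
  qed
qed

lemma upd_meas:
  assumes "y \<in> space (N j)" "j \<notin> I"
  shows "(\<lambda>v. v(j := y)) \<in> Pi\<^sub>M I N \<rightarrow>\<^sub>M Pi\<^sub>M (insert j I) N"
proof (rule measurable_PiM_single')
  fix i assume i: "i \<in> insert j I"
  show "(\<lambda>v. (v(j := y)) i) \<in> Pi\<^sub>M I N \<rightarrow>\<^sub>M N i"
  proof (cases "i = j")
    case True then show ?thesis using assms by simp
  next
    case False then have "i \<in> I" using i by auto
    then show ?thesis using False by simp
  qed
next
  show "(\<lambda>v. v(j := y)) \<in> space (Pi\<^sub>M I N) \<rightarrow> (\<Pi>\<^sub>E i\<in>insert j I. space (N i))"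
    using assms by (auto simp: space_PiM PiE_iff extensional_def)
qed

lemma prod_indicator_ennreal:
  "finite J \<Longrightarrow> (\<Prod>i\<in>J. indicator (A i) (x i) :: ennreal) = (if \<forall>i\<in>J. x i \<in> A i then 1 else 0)"
  by (induction J rule: finite_induct) (auto simp: indicator_def)

lemma sum_t:
  fixes j k :: nat and y z :: real
  assumes "1 \<le> j" "j < k"
  shows "(\<Sum>i\<in>{1..k} - {j,k}. if i < j then y else z) = (real j - 1)*y + (real k - real j - 1)*z"
proof -
  have eq: "{1..k} - {j,k} = {1..<j} \<union> {j<..<k}" using assms by auto
  have "(\<Sum>i\<in>{1..k} - {j,k}. if i < j then y else z) = (\<Sum>i\<in>{1..<j}. if i < j then y else z) + (\<Sum>i\<in>{j<..<k}. if i < j then y else z)"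
    unfolding eq by (rule sum.union_disjoint) auto
  also have "\<dots> = (\<Sum>i\<in>{1..<j}. y) + (\<Sum>i\<in>{j<..<k}. z)"
    by (intro arg_cong2[where f="(+)"] sum.cong) auto
  also have "\<dots> = (real j - 1)*y + (real k - real j - 1)*z"
    using assms by (simp add: of_nat_diff)
  finally show ?thesis .
qed

lemma pointwise_S:
  fixes j k :: nat and w x :: "nat \<Rightarrow> real"
  assumes jk: "1 \<le> j" "j < k" and w: "w j = y" "w k = z" "\<And>i. i \<noteq> j \<Longrightarrow> i \<noteq> k \<Longrightarrow> w i = x i"
  shows "(w j \<le> a \<and> w k \<le> b \<and> (\<forall>i\<in>{1..<j}. w i < w j) \<and> (\<forall>i\<in>{1..<k}. w i < w k))
     \<longleftrightarrow> (y \<le> a \<and> z \<le> b \<and> y < z \<and> (\<forall>i\<in>{1..k} - {j,k}. x i \<in> {..< (if i < j then y else z)}))"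
proof
  assume h: "w j \<le> a \<and> w k \<le> b \<and> (\<forall>i\<in>{1..<j}. w i < w j) \<and> (\<forall>i\<in>{1..<k}. w i < w k)"
  have "y < z" using h jk w by auto
  moreover have "x i < (if i < j then y else z)" if i: "i \<in> {1..k} - {j,k}" for i
  proof (cases "i < j")
    case True
    then have "i \<in> {1..<j}" using i by auto
    then have "w i < w j" using h by blast
    then show ?thesis using True w(1) w(3)[of i] i by auto
  next
    case False
    then have "i \<in> {1..<k}" using i by auto
    then have "w i < w k" using h by blast
    then show ?thesis using False w(2) w(3)[of i] i by auto
  qed
  ultimately show "y \<le> a \<and> z \<le> b \<and> y < z \<and> (\<forall>i\<in>{1..k} - {j,k}. x i \<in> {..< (if i < j then y else z)})"
    using h w by auto
next
  assume h: "y \<le> a \<and> z \<le> b \<and> y < z \<and> (\<forall>i\<in>{1..k} - {j,k}. x i \<in> {..< (if i < j then y else z)})"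
  have 1: "w i < w j" if "i \<in> {1..<j}" for i
  proof -
    have i: "i \<in> {1..k} - {j,k}" "i < j" using that jk by auto
    then have "x i \<in> {..< (if i < j then y else z)}" using h by blast
    then show ?thesis using i w(1) w(3)[of i] by auto
  qed
  have 2: "w i < w k" if "i \<in> {1..<k}" for i
  proof (cases "i = j")
    case True then show ?thesis using h w by simp
  next
    case False
    then have i: "i \<in> {1..k} - {j,k}" using that jk by auto
    then have "x i \<in> {..< (if i < j then y else z)}" using h by blast
    moreover have "y < z" using h by simp
    ultimately show ?thesis using i w(1,2) w(3)[of i] False by (cases "i < j") auto
  qed
  show "w j \<le> a \<and> w k \<le> b \<and> (\<forall>i\<in>{1..<j}. w i < w j) \<and> (\<forall>i\<in>{1..<k}. w i < w k)"
    using 1 2 h w by auto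
qed

lemma em': "0 \<le> p \<Longrightarrow> ennreal p * ennreal q = ennreal (p*q)"
  by (simp add: ennreal_mult')

lemma prod_main:
  fixes j k :: nat and a b :: real
  assumes jk: "1 \<le> j" "j < k" and ab: "a \<le> 0" "b \<le> 0"
  shows "emeasure (Pi\<^sub>M {1..k} (\<lambda>_. Dm)) {x \<in> space (Pi\<^sub>M {1..k} (\<lambda>_. Dm)). x j \<le> a \<and> x k \<le> b \<and> (\<forall>i\<in>{1..<j}. x i < x j) \<and> (\<forall>i\<in>{1..<k}. x i < x k)}
    = ennreal ((exp ((real k - real j)*b + real j*min a b)/real j - exp (real k*min a b)/real k)/(real k - real j))"
proof -
  interpret PS: product_sigma_finite "\<lambda>_::nat. Dm"
    unfolding product_sigma_finite_def using prob_space_Dm prob_space_imp_sigma_finite by blast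
  define J where "J = {1..k} - {j,k}"
  define S where "S = {x \<in> space (Pi\<^sub>M {1..k} (\<lambda>_. Dm)). x j \<le> a \<and> x k \<le> b \<and> (\<forall>i\<in>{1..<j}. x i < x j) \<and> (\<forall>i\<in>{1..<k}. x i < x k)}"
  have IJ: "{1..k} = insert j (insert k J)" using jk by (auto simp: J_def)
  have fJ: "finite J" "j \<notin> insert k J" "k \<notin> J" using jk by (auto simp: J_def)
  have comp: "(\<lambda>x. x i) \<in> borel_measurable (Pi\<^sub>M {1..k} (\<lambda>_. Dm))" if "i \<in> {1..k}" for i
    using measurable_component_singleton[OF that, of "\<lambda>_. Dm"] measurable_cong_sets[OF refl sets_Dm] by metis
  have lt: "Measurable.pred (Pi\<^sub>M {1..k} (\<lambda>_. Dm)) (\<lambda>x. x i < x l)" if "i \<in> {1..k}" "l \<in> {1..k}" for i l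
    using comp[OF that(1)] comp[OF that(2)] by measurable
  have le: "Measurable.pred (Pi\<^sub>M {1..k} (\<lambda>_. Dm)) (\<lambda>x. x i \<le> c)" if "i \<in> {1..k}" for i c
    using comp[OF that(1)] by measurable
  have b1: "Measurable.pred (Pi\<^sub>M {1..k} (\<lambda>_. Dm)) (\<lambda>x. \<forall>i\<in>{1..<j}. x i < x j)"
    by (rule pred_intros_finite(3)) (use jk in \<open>auto intro!: lt\<close>)
  have b2: "Measurable.pred (Pi\<^sub>M {1..k} (\<lambda>_. Dm)) (\<lambda>x. \<forall>i\<in>{1..<k}. x i < x k)"
    by (rule pred_intros_finite(3)) (use jk in \<open>auto intro!: lt\<close>)
  have "Measurable.pred (Pi\<^sub>M {1..k} (\<lambda>_. Dm)) (\<lambda>x. x j \<le> a \<and> x k \<le> b \<and> (\<forall>i\<in>{1..<j}. x i < x j) \<and> (\<forall>i\<in>{1..<k}. x i < x k))"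
    using jk by (intro pred_intros_logic le b1 b2) auto
  then have Smeas: "S \<in> sets (Pi\<^sub>M {1..k} (\<lambda>_. Dm))"
    unfolding S_def pred_def .
  then have Smeas': "S \<in> sets (Pi\<^sub>M (insert j (insert k J)) (\<lambda>_. Dm))" using IJ by simp
  have key: "indicator S (x(k := z, j := y)) = ennreal (indicator {..a} y * indicator {..b} z * indicator {..<z} y) * (\<Prod>i\<in>J. indicator {..< (if i < j then y else z)} (x i))"
    if "x \<in> space (Pi\<^sub>M J (\<lambda>_. Dm))" for x y z
  proof -
    have sp: "x(k := z, j := y) \<in> space (Pi\<^sub>M {1..k} (\<lambda>_. Dm))" using that jk by (auto simp: space_PiM PiE_iff extensional_def J_def)
    have "x(k:=z,j:=y) \<in> S \<longleftrightarrow> (y \<le> a \<and> z \<le> b \<and> y < z \<and> (\<forall>i\<in>J. x i \<in> {..< (if i < j then y else z)}))"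
      unfolding S_def J_def using sp pointwise_S[OF jk, of "x(k:=z,j:=y)" y z x] jk by auto
    then show ?thesis
      unfolding prod_indicator_ennreal[OF fJ(1), of "\<lambda>i. {..< (if i < j then y else z)}" x]
      by (simp add: indicator_def)
  qed
  have step1: "emeasure (Pi\<^sub>M {1..k} (\<lambda>_. Dm)) S = (\<integral>\<^sup>+ y. \<integral>\<^sup>+ z. \<integral>\<^sup>+ x. indicator S (x(k:=z, j:=y)) \<partial>Pi\<^sub>M J (\<lambda>_. Dm) \<partial>Dm \<partial>Dm)"
  proof -
    have "emeasure (Pi\<^sub>M {1..k} (\<lambda>_. Dm)) S = (\<integral>\<^sup>+ x. indicator S x \<partial>Pi\<^sub>M (insert j (insert k J)) (\<lambda>_. Dm))"
      using Smeas IJ by simp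
    also have "\<dots> = (\<integral>\<^sup>+ y. \<integral>\<^sup>+ x. indicator S (x(j:=y)) \<partial>Pi\<^sub>M (insert k J) (\<lambda>_. Dm) \<partial>Dm)"
      by (rule PS.product_nn_integral_insert_rev) (use fJ Smeas' in auto)
    also have "\<dots> = (\<integral>\<^sup>+ y. \<integral>\<^sup>+ z. \<integral>\<^sup>+ x. indicator S (x(k:=z, j:=y)) \<partial>Pi\<^sub>M J (\<lambda>_. Dm) \<partial>Dm \<partial>Dm)"
    proof (rule nn_integral_cong)
      fix y :: real
      have m: "(\<lambda>x. indicator S (x(j:=y)) :: ennreal) \<in> borel_measurable (Pi\<^sub>M (insert k J) (\<lambda>_. Dm))"
        using measurable_comp[OF upd_meas[of y "\<lambda>_. Dm" j "insert k J"] borel_measurable_indicator[OF Smeas']] fJ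
        by (simp add: comp_def)
      show "(\<integral>\<^sup>+ x. indicator S (x(j:=y)) \<partial>Pi\<^sub>M (insert k J) (\<lambda>_. Dm)) = (\<integral>\<^sup>+ z. \<integral>\<^sup>+ x. indicator S (x(k:=z, j:=y)) \<partial>Pi\<^sub>M J (\<lambda>_. Dm) \<partial>Dm)"
        by (rule PS.product_nn_integral_insert_rev) (use fJ m in auto)
    qed
    finally show ?thesis .
  qed
  have step2: "(\<integral>\<^sup>+ x. indicator S (x(k:=z, j:=y)) \<partial>Pi\<^sub>M J (\<lambda>_. Dm))
     = ennreal (indicator {..a} y * indicator {..b} z * indicator {..<z} y * exp ((real j - 1)*y + (real k - real j - 1)*z))" for y z
  proof -
    have "(\<integral>\<^sup>+ x. indicator S (x(k:=z, j:=y)) \<partial>Pi\<^sub>M J (\<lambda>_. Dm))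
      = (\<integral>\<^sup>+ x. ennreal (indicator {..a} y * indicator {..b} z * indicator {..<z} y) * (\<Prod>i\<in>J. indicator {..< (if i < j then y else z)} (x i)) \<partial>Pi\<^sub>M J (\<lambda>_. Dm))"
      by (rule nn_integral_cong) (simp add: key)
    also have "\<dots> = ennreal (indicator {..a} y * indicator {..b} z * indicator {..<z} y) * (\<integral>\<^sup>+ x. (\<Prod>i\<in>J. indicator {..< (if i < j then y else z)} (x i)) \<partial>Pi\<^sub>M J (\<lambda>_. Dm))"
      by (rule nn_integral_cmult) (use fJ in measurable)
    also have "(\<integral>\<^sup>+ x. (\<Prod>i\<in>J. indicator {..< (if i < j then y else z)} (x i)) \<partial>Pi\<^sub>M J (\<lambda>_. Dm))
       = (\<Prod>i\<in>J. \<integral>\<^sup>+ x. indicator {..< (if i < j then y else z)} x \<partial>Dm)"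
      by (rule PS.product_nn_integral_prod) (use fJ in auto)
    also have "\<dots> = (\<Prod>i\<in>J. emeasure Dm {..< (if i < j then y else z)})"
      by (intro prod.cong refl nn_integral_indicator) simp
    finally have eq: "(\<integral>\<^sup>+ x. indicator S (x(k:=z, j:=y)) \<partial>Pi\<^sub>M J (\<lambda>_. Dm)) =
       ennreal (indicator {..a} y * indicator {..b} z * indicator {..<z} y) * (\<Prod>i\<in>J. emeasure Dm {..< (if i < j then y else z)})" .
    show ?thesis
    proof (cases "y \<le> a \<and> z \<le> b \<and> y < z")
      case True
      then have "y \<le> 0" "z \<le> 0" using ab by auto
      then have "(\<Prod>i\<in>J. emeasure Dm {..< (if i < j then y else z)}) = (\<Prod>i\<in>J. ennreal (exp (if i < j then y else z)))"
        by (intro prod.cong refl) (auto simp: emeasure_Dm_Iio)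
      also have "\<dots> = ennreal (exp (\<Sum>i\<in>J. if i < j then y else z))"
        by (simp add: prod_ennreal exp_sum fJ)
      also have "\<dots> = ennreal (exp ((real j - 1)*y + (real k - real j - 1)*z))"
        unfolding J_def sum_t[OF jk] ..
      finally show ?thesis using eq True by simp
    next
      case False
      then show ?thesis using eq by (auto simp: indicator_def)
    qed
  qed
  have [measurable]: "Measurable.pred borel (\<lambda>x::real. y \<in> {..<x})" for y by simp
  have [measurable]: "(\<lambda>x::real. exp (c + d*x)) \<in> borel_measurable borel" for c d
    by (intro borel_measurable_continuous_onI continuous_intros)
  define m where "m = real k - real j"
  have m: "m > 0" using jk by (simp add: m_def)
  have step3: "(\<integral>\<^sup>+ z. ennreal (indicator {..a} y * indicator {..b} z * indicator {..<z} y * exp ((real j - 1)*y + (real k - real j - 1)*z)) \<partial>Dm)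
     = ennreal (indicator {..a} y * exp ((real j - 1)*y)) * ennreal ((exp (m*b) - exp (m*y))/m)" for y
  proof -
    have "(\<integral>\<^sup>+ z. ennreal (indicator {..a} y * indicator {..b} z * indicator {..<z} y * exp ((real j - 1)*y + (real k - real j - 1)*z)) \<partial>Dm)
      = (\<integral>\<^sup>+ z. ennreal (indicator {..0} z * exp z) * ennreal (indicator {..a} y * indicator {..b} z * indicator {..<z} y * exp ((real j - 1)*y + (real k - real j - 1)*z)) \<partial>lborel)"
      by (rule Dm_int) measurable
    also have "\<dots> = (\<integral>\<^sup>+ z. ennreal (indicator {..a} y * exp ((real j - 1)*y)) * ennreal (indicator {y<..b} z * exp (m*z)) \<partial>lborel)"
    proof (rule nn_integral_cong)
      fix z :: real
      have e: "exp z * exp ((real j - 1)*y + (real k - real j - 1)*z) = exp ((real j - 1)*y) * exp (m*z)"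
        unfolding mult_exp_exp m_def by (simp add: algebra_simps)
      have "indicator {..0} z * exp z * (indicator {..a} y * indicator {..b} z * indicator {..<z} y * exp ((real j - 1)*y + (real k - real j - 1)*z))
         = indicator {..a} y * exp ((real j - 1)*y) * (indicator {y<..b} z * exp (m*z))"
      proof (cases "y \<le> a \<and> y < z \<and> z \<le> b")
        case True then show ?thesis using ab e by (simp add: indicator_def)
      qed (auto simp: indicator_def)
      then show "ennreal (indicator {..0} z * exp z) * ennreal (indicator {..a} y * indicator {..b} z * indicator {..<z} y * exp ((real j - 1)*y + (real k - real j - 1)*z))
         = ennreal (indicator {..a} y * exp ((real j - 1)*y)) * ennreal (indicator {y<..b} z * exp (m*z))"
        by (simp add: em')
    qed
    also have "\<dots> = ennreal (indicator {..a} y * exp ((real j - 1)*y)) * (\<integral>\<^sup>+ z. ennreal (indicator {y<..b} z * exp (m*z)) \<partial>lborel)"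
      by (rule nn_integral_cmult) measurable
    also have "\<dots> = ennreal (indicator {..a} y * exp ((real j - 1)*y)) * ennreal ((exp (m*b) - exp (m*y))/m)"
      using Q[OF m] by simp
    finally show ?thesis .
  qed
  have step4: "(\<integral>\<^sup>+ y. ennreal (indicator {..a} y * exp ((real j - 1)*y)) * ennreal ((exp (m*b) - exp (m*y))/m) \<partial>Dm)
     = (\<integral>\<^sup>+ y. ennreal (indicator {..min a b} y * (exp (real j*y) * (exp (m*b) - exp (m*y))/m)) \<partial>lborel)"
  proof -
    have "(\<integral>\<^sup>+ y. ennreal (indicator {..a} y * exp ((real j - 1)*y)) * ennreal ((exp (m*b) - exp (m*y))/m) \<partial>Dm)
      = (\<integral>\<^sup>+ y. ennreal (indicator {..0} y * exp y) * (ennreal (indicator {..a} y * exp ((real j - 1)*y)) * ennreal ((exp (m*b) - exp (m*y))/m)) \<partial>lborel)"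
      by (rule Dm_int) measurable
    also have "\<dots> = (\<integral>\<^sup>+ y. ennreal (indicator {..min a b} y * (exp (real j*y) * (exp (m*b) - exp (m*y))/m)) \<partial>lborel)"
    proof (rule nn_integral_cong)
      fix y :: real
      have e: "exp y * exp ((real j - 1)*y) = exp (real j * y)"
        unfolding mult_exp_exp by (simp add: algebra_simps)
      have L: "ennreal (indicator {..0} y * exp y) * (ennreal (indicator {..a} y * exp ((real j - 1)*y)) * ennreal ((exp (m*b) - exp (m*y))/m))
         = ennreal (indicator {..0} y * exp y * (indicator {..a} y * exp ((real j - 1)*y) * ((exp (m*b) - exp (m*y))/m)))"
        by (simp add: em')
      show "ennreal (indicator {..0} y * exp y) * (ennreal (indicator {..a} y * exp ((real j - 1)*y)) * ennreal ((exp (m*b) - exp (m*y))/m))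
         = ennreal (indicator {..min a b} y * (exp (real j*y) * (exp (m*b) - exp (m*y))/m))"
        unfolding L
      proof (cases "y \<le> min a b")
        case True
        then show "ennreal (indicator {..0} y * exp y * (indicator {..a} y * exp ((real j - 1)*y) * ((exp (m*b) - exp (m*y))/m)))
         = ennreal (indicator {..min a b} y * (exp (real j*y) * (exp (m*b) - exp (m*y))/m))"
        proof -
          have r: "exp y * (exp ((real j - 1)*y) * ((exp (m*b) - exp (m*y))/m)) = exp (real j*y) * (exp (m*b) - exp (m*y))/m"
            unfolding e[symmetric] by simp
          have i: "indicator {..0} y = (1::real)" "indicator {..a} y = (1::real)" "indicator {..min a b} y = (1::real)"
            using True ab by auto
          show ?thesis by (simp only: i mult_1_left r)
        qed
      next
        case False
        have "indicator {..0} y * exp y * (indicator {..a} y * exp ((real j - 1)*y) * ((exp (m*b) - exp (m*y))/m)) \<le> 0"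
        proof (cases "y \<le> a \<and> y \<le> 0")
          case True
          then have "y > b" using False by auto
          then have "exp (m*b) < exp (m*y)" using m by simp
          then have "(exp (m*b) - exp (m*y))/m < 0" using m by (simp add: divide_neg_pos)
          then have "exp y * (exp ((real j - 1)*y) * ((exp (m*b) - exp (m*y))/m)) \<le> 0"
            by (intro mult_nonneg_nonpos) (auto intro: mult_nonneg_nonpos)
          moreover have i: "indicator {..0} y = (1::real)" "indicator {..a} y = (1::real)"
            using True by auto
          ultimately show ?thesis by (simp only: i mult_1_left)
        qed (auto simp: indicator_def)
        then have A: "ennreal (indicator {..0} y * exp y * (indicator {..a} y * exp ((real j - 1)*y) * ((exp (m*b) - exp (m*y))/m))) = 0"
          by (rule ennreal_neg)
        have B: "indicator {..min a b} y = (0::real)" using False by simp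
        show "ennreal (indicator {..0} y * exp y * (indicator {..a} y * exp ((real j - 1)*y) * ((exp (m*b) - exp (m*y))/m)))
         = ennreal (indicator {..min a b} y * (exp (real j*y) * (exp (m*b) - exp (m*y))/m))"
          unfolding A B by simp
      qed
    qed
    finally show ?thesis .
  qed
  have "emeasure (Pi\<^sub>M {1..k} (\<lambda>_. Dm)) S = (\<integral>\<^sup>+ y. \<integral>\<^sup>+ z. ennreal (indicator {..a} y * indicator {..b} z * indicator {..<z} y * exp ((real j - 1)*y + (real k - real j - 1)*z)) \<partial>Dm \<partial>Dm)"
    unfolding step1 step2 ..
  also have "\<dots> = (\<integral>\<^sup>+ y. ennreal (indicator {..a} y * exp ((real j - 1)*y)) * ennreal ((exp (m*b) - exp (m*y))/m) \<partial>Dm)"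
    unfolding step3 ..
  also have "\<dots> = ennreal ((exp (m*b + real j*min a b)/real j - exp ((real j+m)*min a b)/(real j+m))/m)"
    unfolding step4 using R[OF m, of "real j" "min a b" b] jk by simp
  finally show ?thesis unfolding S_def m_def by simp
qed

lemma S_meas:
  fixes j k :: nat and a b :: real
  assumes jk: "1 \<le> j" "j < k"
  shows "{x \<in> space (Pi\<^sub>M {1..k} (\<lambda>_. Dm)). x j \<le> a \<and> x k \<le> b \<and> (\<forall>i\<in>{1..<j}. x i < x j) \<and> (\<forall>i\<in>{1..<k}. x i < x k)} \<in> sets (Pi\<^sub>M {1..k} (\<lambda>_. Dm))"
proof -
  have comp: "(\<lambda>x. x i) \<in> borel_measurable (Pi\<^sub>M {1..k} (\<lambda>_. Dm))" if "i \<in> {1..k}" for i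
    using measurable_component_singleton[OF that, of "\<lambda>_. Dm"] measurable_cong_sets[OF refl sets_Dm] by metis
  have lt: "Measurable.pred (Pi\<^sub>M {1..k} (\<lambda>_. Dm)) (\<lambda>x. x i < x l)" if "i \<in> {1..k}" "l \<in> {1..k}" for i l
    using comp[OF that(1)] comp[OF that(2)] by measurable
  have le: "Measurable.pred (Pi\<^sub>M {1..k} (\<lambda>_. Dm)) (\<lambda>x. x i \<le> c)" if "i \<in> {1..k}" for i c
    using comp[OF that(1)] by measurable
  have b1: "Measurable.pred (Pi\<^sub>M {1..k} (\<lambda>_. Dm)) (\<lambda>x. \<forall>i\<in>{1..<j}. x i < x j)"
    by (rule pred_intros_finite(3)) (use jk in \<open>auto intro!: lt\<close>)
  have b2: "Measurable.pred (Pi\<^sub>M {1..k} (\<lambda>_. Dm)) (\<lambda>x. \<forall>i\<in>{1..<k}. x i < x k)"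
    by (rule pred_intros_finite(3)) (use jk in \<open>auto intro!: lt\<close>)
  have "Measurable.pred (Pi\<^sub>M {1..k} (\<lambda>_. Dm)) (\<lambda>x. x j \<le> a \<and> x k \<le> b \<and> (\<forall>i\<in>{1..<j}. x i < x j) \<and> (\<forall>i\<in>{1..<k}. x i < x k))"
    using jk by (intro pred_intros_logic le b1 b2) auto
  then show ?thesis unfolding pred_def .
qed

definition Gf :: "nat \<Rightarrow> nat \<Rightarrow> real \<Rightarrow> real \<Rightarrow> real" where
  "Gf j k a b = (exp ((real k - real j)*b + real j*min a b)/real j - exp (real k*min a b)/real k)/(real k - real j)"

lemma Gf_nonneg:
  assumes jk: "1 \<le> j" "j < k"
  shows "Gf j k a b \<ge> 0"
proof -
  have "(real k - real j) * min a b \<le> (real k - real j) * b"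
    by (rule mult_left_mono) (use jk in auto)
  then have "real k * min a b \<le> (real k - real j)*b + real j*min a b"
    by (simp add: algebra_simps)
  then have "exp (real k*min a b) \<le> exp ((real k - real j)*b + real j*min a b)" by simp
  moreover have "exp (real k*min a b)/real k \<le> exp (real k*min a b)/real j"
    using jk by (intro divide_left_mono) auto
  ultimately have "exp (real k*min a b)/real k \<le> exp ((real k - real j)*b + real j*min a b)/real j"
    using jk by (smt (verit) divide_right_mono of_nat_0_le_iff)
  then show ?thesis unfolding Gf_def using jk by simp
qed

lemma prob_formula:
  fixes M :: "'a measure" and eta :: "nat \<Rightarrow> 'a \<Rightarrow> real"
  assumes P: "prob_space M" and ind: "prob_space.indep_vars M (\<lambda>_. borel) eta {1..}"
    and F: "\<And>i x. i \<ge> 1 \<Longrightarrow> x \<le> 0 \<Longrightarrow> measure M {w \<in> space M. eta i w \<le> x} = exp x"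
    and jk: "1 \<le> j" "j < k" and ab: "a \<le> 0" "b \<le> 0"
  shows "measure M {w \<in> space M. (eta j w \<le> a \<and> eta k w \<le> b) \<and> (is_record eta j w \<and> is_record eta k w)} = Gf j k a b"
proof -
  interpret prob_space M by fact
  have rv: "random_variable borel (eta i)" if "i \<ge> 1" for i
    using ind that unfolding indep_vars_def by auto
  define I where "I = {1..k}"
  have indI: "indep_vars (\<lambda>_. borel) eta I" by (rule indep_vars_subset[OF ind]) (auto simp: I_def)
  have "distr M (Pi\<^sub>M I (\<lambda>_. borel)) (\<lambda>w. \<lambda>i\<in>I. eta i w) = Pi\<^sub>M I (\<lambda>i. distr M borel (eta i))"
    by (rule indep_vars_iff_distr_eq_PiM'[THEN iffD1, OF _ _ indI]) (use jk in \<open>auto simp: I_def intro: rv\<close>)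
  also have "\<dots> = Pi\<^sub>M I (\<lambda>_. Dm)"
    by (rule PiM_cong) (auto simp: I_def intro!: distr_eq_Dm P rv F)
  finally have D: "distr M (Pi\<^sub>M I (\<lambda>_. borel)) (\<lambda>w. \<lambda>i\<in>I. eta i w) = Pi\<^sub>M I (\<lambda>_. Dm)" .
  define S where "S = {x \<in> space (Pi\<^sub>M {1..k} (\<lambda>_. Dm)). x j \<le> a \<and> x k \<le> b \<and> (\<forall>i\<in>{1..<j}. x i < x j) \<and> (\<forall>i\<in>{1..<k}. x i < x k)}"
  have SmDm: "S \<in> sets (Pi\<^sub>M I (\<lambda>_. Dm))" unfolding S_def I_def by (rule S_meas[OF jk])
  have Sm: "S \<in> sets (Pi\<^sub>M I (\<lambda>_. borel))" using SmDm D by (metis sets_distr)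
  have Vm: "(\<lambda>w. \<lambda>i\<in>I. eta i w) \<in> M \<rightarrow>\<^sub>M Pi\<^sub>M I (\<lambda>_. borel)"
    by (rule measurable_restrict) (auto simp: I_def intro: rv)
  have pre: "(\<lambda>w. \<lambda>i\<in>I. eta i w) -` S \<inter> space M = {w \<in> space M. (eta j w \<le> a \<and> eta k w \<le> b) \<and> (is_record eta j w \<and> is_record eta k w)}"
    using jk unfolding S_def I_def is_record_def by (auto simp: space_PiM)
  have "measure M {w \<in> space M. (eta j w \<le> a \<and> eta k w \<le> b) \<and> (is_record eta j w \<and> is_record eta k w)} = measure (Pi\<^sub>M I (\<lambda>_. Dm)) S"
    using measure_distr[OF Vm Sm] D pre by simp
  also have "\<dots> = Gf j k a b"
    using prod_main[OF jk ab] Gf_nonneg[OF jk, of a b] unfolding S_def I_def Gf_def measure_def by simp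
  finally show ?thesis .
qed

lemma denom_formula:
  fixes M :: "'a measure" and eta :: "nat \<Rightarrow> 'a \<Rightarrow> real"
  assumes P: "prob_space M" and ind: "prob_space.indep_vars M (\<lambda>_. borel) eta {1..}"
    and F: "\<And>i x. i \<ge> 1 \<Longrightarrow> x \<le> 0 \<Longrightarrow> measure M {w \<in> space M. eta i w \<le> x} = exp x"
    and jk: "1 \<le> j" "j < k"
  shows "measure M {w \<in> space M. is_record eta j w \<and> is_record eta k w} = Gf j k 0 0"
proof -
  interpret prob_space M by fact
  have rv: "random_variable borel (eta i)" if "i \<ge> 1" for i
    using ind that unfolding indep_vars_def by auto
  have recm: "Measurable.pred M (\<lambda>w. is_record eta m w)" if "m \<ge> 1" for m
    unfolding is_record_def
  proof (rule pred_intros_finite(3))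
    fix i assume i: "i \<in> {1..<m}"
    then have "1 \<le> i" by simp
    then show "Measurable.pred M (\<lambda>w. eta i w < eta m w)"
      using rv[of i] rv[OF that] by measurable
  qed simp
  have le0: "Measurable.pred M (\<lambda>w. eta i w \<le> 0)" if "i \<ge> 1" for i
    using rv[OF that] by measurable
  have k1: "1 \<le> k" using jk by simp
  have AEi: "AE w in M. eta i w \<le> 0" if "i \<ge> 1" for i
  proof -
    have "prob {w \<in> space M. eta i w \<le> 0} = 1" using F[OF that, of 0] by simp
    from AE_prob_1[OF this] show ?thesis by eventually_elim auto
  qed
  have "measure M {w \<in> space M. is_record eta j w \<and> is_record eta k w}
      = measure M {w \<in> space M. (eta j w \<le> 0 \<and> eta k w \<le> 0) \<and> (is_record eta j w \<and> is_record eta k w)}"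
  proof (rule finite_measure_eq_AE)
    show "AE x in M. (x \<in> {w \<in> space M. is_record eta j w \<and> is_record eta k w}) =
        (x \<in> {w \<in> space M. (eta j w \<le> 0 \<and> eta k w \<le> 0) \<and> (is_record eta j w \<and> is_record eta k w)})"
      using AEi[OF jk(1)] AEi[OF k1] by eventually_elim auto
    show "{w \<in> space M. is_record eta j w \<and> is_record eta k w} \<in> events"
      using recm[OF jk(1)] recm[OF k1] by measurable
    show "{w \<in> space M. (eta j w \<le> 0 \<and> eta k w \<le> 0) \<and> (is_record eta j w \<and> is_record eta k w)} \<in> events"
      using recm[OF jk(1)] recm[OF k1] le0[OF jk(1)] le0[OF k1] by measurable
  qed
  also have "\<dots> = Gf j k 0 0"
    by (rule prob_formula[OF P ind F jk]) auto
  finally show ?thesis .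
qed

definition Phi :: "real \<Rightarrow> real \<Rightarrow> real \<Rightarrow> real \<Rightarrow> real" where
  "Phi x1 x2 u v = (v * exp ((v - u)*x2 + u*min x1 x2) - u * exp (v * min x1 x2)) / (v - u)"

lemma ratio_alg:
  fixes J K N E1 E2 :: real
  assumes "N > 0" "J > 0" "K > J"
  shows "((E1/J - E2/K)/(K - J)) / ((1/J - 1/K)/(K - J)) = ((K/N)*E1 - (J/N)*E2)/(K/N - J/N)"
proof -
  have KJ: "K - J \<noteq> 0" using assms by simp
  have 1: "(E1/J - E2/K) = (K*E1 - J*E2)/(J*K)" "(1/J - 1/K) = (K - J)/(J*K)"
    using assms by (simp_all add: field_simps)
  have "((E1/J - E2/K)/(K - J)) / ((1/J - 1/K)/(K - J)) = (E1/J - E2/K) / (1/J - 1/K)"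
    using KJ by simp
  also have "\<dots> = (K*E1 - J*E2)/(K - J)"
    unfolding 1 using assms by simp
  also have "\<dots> = ((K/N)*E1 - (J/N)*E2)/(K/N - J/N)"
    using assms by (simp add: diff_divide_distrib[symmetric])
  finally show ?thesis .
qed

lemma ratio:
  assumes n: "n > 0" and jk: "1 \<le> j" "j < k"
  shows "Gf j k (x1/real n) (x2/real n) / Gf j k 0 0 = Phi x1 x2 (real j/real n) (real k/real n)"
proof -
  have mn: "min (x1/real n) (x2/real n) = min x1 x2 / real n"
  proof -
    have "x1/real n \<le> x2/real n \<longleftrightarrow> x1 \<le> x2" using n by (simp add: divide_le_cancel)
    then show ?thesis by (simp add: min_def)
  qed
  have e1: "(real k - real j)*(x2/real n) + real j*(min x1 x2/real n) = (real k/real n - real j/real n)*x2 + (real j/real n)*min x1 x2"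
    using n by (simp add: field_simps)
  have e2: "real k*(min x1 x2/real n) = (real k/real n)*min x1 x2" by simp
  have "Gf j k (x1/real n) (x2/real n) / Gf j k 0 0 =
     ((exp ((real k/real n - real j/real n)*x2 + (real j/real n)*min x1 x2)/real j - exp ((real k/real n)*min x1 x2)/real k)/(real k - real j))
     / ((1/real j - 1/real k)/(real k - real j))"
    unfolding Gf_def mn e1 e2 by simp
  also have "\<dots> = Phi x1 x2 (real j/real n) (real k/real n)"
    unfolding Phi_def by (rule ratio_alg) (use n jk in auto)
  finally show ?thesis .
qed

lemma Phi_H:
  assumes "l2 > l1"
  shows "Phi x1 x2 l1 l2 = H l1 l2 x1 x2"
proof (cases "x1 < x2")
  case True
  have "exp (l1*x1) * exp ((l2 - l1)*x1) = exp (l2*x1)" unfolding mult_exp_exp by (simp add: algebra_simps)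
  moreover have "exp (l1*x1) * exp ((l2 - l1)*x2) = exp ((l2 - l1)*x2 + l1*x1)" unfolding mult_exp_exp by (simp add: algebra_simps)
  moreover have g: "a*(b/d*c - e/d*f) = (b*(a*c) - e*(a*f))/d" for a b c d e f :: real
    by (simp add: algebra_simps diff_divide_distrib)
  ultimately show ?thesis using True assms unfolding Phi_def H_def Let_def g
    by (simp add: min_def)
next
  case False
  then show ?thesis using assms unfolding Phi_def H_def Let_def
    by (simp add: min_def field_simps)
qed

theorem proposition8:
  fixes M :: "'a measure" and eta :: "nat \<Rightarrow> 'a \<Rightarrow> real"
    and j k :: "nat \<Rightarrow> nat" and l1 l2 x1 x2 :: real
  assumes "prob_space M"
    and "prob_space.indep_vars M (\<lambda>_. borel) eta {1..}"
    and "\<And>i x. i \<ge> 1 \<Longrightarrow> x \<le> 0 \<Longrightarrow> measure M {w \<in> space M. eta i w \<le> x} = exp x"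
    and "\<And>n. 1 \<le> j n" and "\<And>n. j n < k n"
    and "(\<lambda>n. real (j n) / real n) \<longlonglongrightarrow> l1" and "l1 > 0"
    and "(\<lambda>n. real (k n) / real n) \<longlonglongrightarrow> l2" and "l2 > l1"
    and "x1 \<le> 0" and "x2 \<le> 0"
  shows "(\<lambda>n. cond_prob M
            (\<lambda>w. eta (j n) w \<le> x1 / real n \<and> eta (k n) w \<le> x2 / real n)
            (\<lambda>w. is_record eta (j n) w \<and> is_record eta (k n) w))
         \<longlonglongrightarrow> H l1 l2 x1 x2"
proof -
  interpret prob_space M by fact
  define u where "u n = real (j n)/real n" for n
  define v where "v n = real (k n)/real n" for n
  have lim: "(\<lambda>n. Phi x1 x2 (u n) (v n)) \<longlonglongrightarrow> Phi x1 x2 l1 l2"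
    unfolding Phi_def u_def v_def using assms(6,8,9) by (intro tendsto_intros) auto
  have ev: "\<forall>\<^sub>F n in sequentially. Phi x1 x2 (u n) (v n) = cond_prob M
            (\<lambda>w. eta (j n) w \<le> x1 / real n \<and> eta (k n) w \<le> x2 / real n)
            (\<lambda>w. is_record eta (j n) w \<and> is_record eta (k n) w)"
    using eventually_ge_at_top[of "1::nat"]
  proof eventually_elim
    case (elim n)
    then have n: "n > 0" by simp
    have a: "x1 / real n \<le> 0" "x2 / real n \<le> 0" using assms(10,11) n by (auto simp: divide_nonpos_pos)
    have "cond_prob M
            (\<lambda>w. eta (j n) w \<le> x1 / real n \<and> eta (k n) w \<le> x2 / real n)
            (\<lambda>w. is_record eta (j n) w \<and> is_record eta (k n) w)
       = Gf (j n) (k n) (x1 / real n) (x2 / real n) / Gf (j n) (k n) 0 0"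
      unfolding cond_prob_def
      using prob_formula[OF assms(1,2,3) assms(4,5) a] denom_formula[OF assms(1,2,3) assms(4,5)]
      by simp
    also have "\<dots> = Phi x1 x2 (u n) (v n)"
      unfolding u_def v_def by (rule ratio[OF n assms(4,5)])
    finally show ?case by simp
  qed
  show ?thesis using Lim_transform_eventually[OF lim ev] Phi_H[OF assms(9)] by simp
qed

end
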